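(* Let $A$ and $B$ be two physical systems with Hamiltonians $H^A=\sum_{x=1}^m a_x|x\rangle\langle x|^A$ and $H^B=\sum_{y=1}^n b_y|y\rangle\langle y|^B$ that are relatively non-degenerate. Then a quantum channel $\mathcal{N}:A\to B$ is time-translation covariant if and only if $$\mathcal{N}^{A\to B}=\Delta^{B\to B}\circ\mathcal{N}^{A\to B}\circ\Delta^{A\to A},$$ where $\Delta^{A\to A}(\rho)=\sum_{x=1}^m\langle x|\rho|x\rangle|x\rangle\langle x|$ and $\Delta^{B\to B}(\rho)=\sum_{y=1}^n\langle y|\rho|y\rangle|y\rangle\langle y|$ are the completely dephasing channels in the energy eigenbases.
   Context: The Hamiltonians are relatively non-degenerate if for all $x,x'\in[m]$ and $y,y'\in[n]$, $a_x-a_{x'}=b_y-b_{y'}$ implies $x=x'$ and $y=y'$ (in particular both are non-degenerate, so the eigenbases are unique up to phases). A channel (CPTP map) $\mathcal{E}:A\to B$ is time-translation covariant if $\mathcal{E}(e^{-iH^At}\rho e^{iH^At})=e^{-iH^Bt}\mathcal{E}(\rho)e^{iH^Bt}$ for all $t\in\mathbb{R}$ and all density matrices $\rho$ on $A$. *)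

theory Defs
  imports "Jordan_Normal_Form.Matrix"
begin

(* Operators on a d-dimensional Hilbert space are complex d x d matrices,
   written in the energy eigenbasis |0>,...,|d-1>. *)

definition psd :: "nat \<Rightarrow> complex mat \<Rightarrow> bool" where
  "psd d X \<longleftrightarrow> X \<in> carrier_mat d d
     \<and> (\<forall>i<d. \<forall>j<d. X $$ (j, i) = cnj (X $$ (i, j)))
     \<and> (\<forall>v :: nat \<Rightarrow> complex.
           0 \<le> Re (\<Sum>i<d. \<Sum>j<d. cnj (v i) * X $$ (i, j) * v j))"

definition tr :: "complex mat \<Rightarrow> complex" where
  "tr X = (\<Sum>i<dim_row X. X $$ (i, i))"

definition density :: "nat \<Rightarrow> complex mat \<Rightarrow> bool" where
  "density d \<rho> \<longleftrightarrow> psd d \<rho> \<and> tr \<rho> = 1"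

definition adj :: "complex mat \<Rightarrow> complex mat" where
  "adj U = mat (dim_col U) (dim_row U) (\<lambda>(i, j). cnj (U $$ (j, i)))"

definition hamiltonian :: "nat \<Rightarrow> (nat \<Rightarrow> real) \<Rightarrow> complex mat" where
  "hamiltonian d e = mat d d (\<lambda>(i, j). if i = j then complex_of_real (e i) else 0)"

definition evol :: "nat \<Rightarrow> (nat \<Rightarrow> real) \<Rightarrow> real \<Rightarrow> complex mat" where
  "evol d e t = mat d d (\<lambda>(i, j). if i = j then exp (- \<i> * complex_of_real (e i * t)) else 0)"

definition linear_map :: "nat \<Rightarrow> nat \<Rightarrow> (complex mat \<Rightarrow> complex mat) \<Rightarrow> bool" where
  "linear_map m n N \<longleftrightarrow>
     (\<forall>X \<in> carrier_mat m m. N X \<in> carrier_mat n n)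
   \<and> (\<forall>X \<in> carrier_mat m m. \<forall>Y \<in> carrier_mat m m. N (X + Y) = N X + N Y)
   \<and> (\<forall>c. \<forall>X \<in> carrier_mat m m. N (c \<cdot>\<^sub>m X) = c \<cdot>\<^sub>m N X)"

(* id_k \<otimes> N acting on a (k*m) x (k*m) matrix viewed as k x k blocks of m x m matrices *)
definition ampliate :: "nat \<Rightarrow> nat \<Rightarrow> nat \<Rightarrow> (complex mat \<Rightarrow> complex mat) \<Rightarrow> complex mat \<Rightarrow> complex mat" where
  "ampliate k m n N X = mat (k * n) (k * n) (\<lambda>(p, q).
      N (mat m m (\<lambda>(r, s). X $$ ((p div n) * m + r, (q div n) * m + s))) $$ (p mod n, q mod n))"

definition completely_positive :: "nat \<Rightarrow> nat \<Rightarrow> (complex mat \<Rightarrow> complex mat) \<Rightarrow> bool" where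
  "completely_positive m n N \<longleftrightarrow>
     (\<forall>k X. psd (k * m) X \<longrightarrow> psd (k * n) (ampliate k m n N X))"

definition trace_preserving :: "nat \<Rightarrow> (complex mat \<Rightarrow> complex mat) \<Rightarrow> bool" where
  "trace_preserving m N \<longleftrightarrow> (\<forall>X \<in> carrier_mat m m. tr (N X) = tr X)"

definition channel :: "nat \<Rightarrow> nat \<Rightarrow> (complex mat \<Rightarrow> complex mat) \<Rightarrow> bool" where
  "channel m n N \<longleftrightarrow> linear_map m n N \<and> completely_positive m n N \<and> trace_preserving m N"

definition rel_nondegenerate :: "nat \<Rightarrow> (nat \<Rightarrow> real) \<Rightarrow> nat \<Rightarrow> (nat \<Rightarrow> real) \<Rightarrow> bool" where
  "rel_nondegenerate m a n b \<longleftrightarrow>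
     (\<forall>x<m. \<forall>x'<m. \<forall>y<n. \<forall>y'<n. a x - a x' = b y - b y' \<longrightarrow> x = x' \<and> y = y')"

definition time_covariant ::
  "nat \<Rightarrow> (nat \<Rightarrow> real) \<Rightarrow> nat \<Rightarrow> (nat \<Rightarrow> real) \<Rightarrow> (complex mat \<Rightarrow> complex mat) \<Rightarrow> bool" where
  "time_covariant m a n b N \<longleftrightarrow>
     (\<forall>t::real. \<forall>\<rho>. density m \<rho> \<longrightarrow>
        N (evol m a t * \<rho> * adj (evol m a t)) = evol n b t * N \<rho> * adj (evol n b t))"

definition dephase :: "nat \<Rightarrow> complex mat \<Rightarrow> complex mat" where
  "dephase d \<rho> = mat d d (\<lambda>(i, j). if i = j then \<rho> $$ (i, i) else 0)"

end

theory Submission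
  imports Defs
begin

definition ph :: "(nat \<Rightarrow> real) \<Rightarrow> real \<Rightarrow> nat \<Rightarrow> nat \<Rightarrow> complex" where
  "ph e t i j = cis (- ((e i - e j) * t))"

lemma exp_cis: "exp (- \<i> * complex_of_real r) = cis (- r)"
  by (simp add: cis_conv_exp)

lemma sum_delta_l: "finite A \<Longrightarrow> (\<Sum>l\<in>A. (if i = l then f l else 0) * (g l :: complex)) = (if i \<in> A then f i * g i else 0)"
proof -
  assume "finite A"
  have "(\<Sum>l\<in>A. (if i = l then f l else 0) * g l) = (\<Sum>l\<in>A. if i = l then f l * g l else 0)"
    by (rule sum.cong) auto
  then show ?thesis using \<open>finite A\<close> by simp
qed

lemma ph_same[simp]: "ph e t i i = 1" by (simp add: ph_def)

lemma conj_evol: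
  assumes X: "X \<in> carrier_mat d d"
  shows "evol d e t * X * adj (evol d e t) = mat d d (\<lambda>(i,j). ph e t i j * X $$ (i,j))"
proof (rule eq_matI)
  fix i j assume i: "i < dim_row (mat d d (\<lambda>(i,j). ph e t i j * X $$ (i,j)))"
     and j: "j < dim_col (mat d d (\<lambda>(i,j). ph e t i j * X $$ (i,j)))"
  then have i: "i < d" and j: "j < d" by auto
  have 1: "(evol d e t * X) $$ (i,k) = exp (- \<i> * complex_of_real (e i * t)) * X $$ (i,k)" if "k < d" for k
    using X i that
    by (simp add: evol_def scalar_prod_def sum_delta_l)
  have "(evol d e t * X * adj (evol d e t)) $$ (i,j) =
        (\<Sum>k<d. (evol d e t * X) $$ (i,k) * (adj (evol d e t)) $$ (k,j))"
    using X i j by (simp add: adj_def evol_def scalar_prod_def atLeast0LessThan)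
  also have "\<dots> = (\<Sum>k<d. (evol d e t * X) $$ (i,k) * (if k = j then cnj (exp (- \<i> * complex_of_real (e j * t))) else 0))"
    using j by (intro sum.cong) (auto simp: adj_def evol_def)
  also have "\<dots> = exp (- \<i> * complex_of_real (e i * t)) * X $$ (i,j) * cnj (exp (- \<i> * complex_of_real (e j * t)))"
    using j 1 by (simp add: if_distrib cong: if_cong)
  also have "\<dots> = ph e t i j * X $$ (i,j)"
    unfolding exp_cis ph_def by (simp add: cis_cnj cis_mult algebra_simps)
  finally show "(evol d e t * X * adj (evol d e t)) $$ (i,j) = mat d d (\<lambda>(i,j). ph e t i j * X $$ (i,j)) $$ (i,j)"
    using i j by simp
qed (use X in \<open>auto simp: adj_def evol_def\<close>)

definition unitm :: "nat \<Rightarrow> nat \<times> nat \<Rightarrow> complex mat" where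
  "unitm m p = mat m m (\<lambda>q. if q = p then 1 else 0)"

definition restr :: "nat \<Rightarrow> complex mat \<Rightarrow> (nat \<times> nat) set \<Rightarrow> complex mat" where
  "restr m X S = mat m m (\<lambda>q. if q \<in> S then X $$ q else 0)"

definition projw :: "nat \<Rightarrow> (nat \<Rightarrow> complex) \<Rightarrow> complex mat" where
  "projw d w = mat d d (\<lambda>(i,j). w i * cnj (w j))"

lemma lin_carrier: "linear_map m n N \<Longrightarrow> X \<in> carrier_mat m m \<Longrightarrow> N X \<in> carrier_mat n n"
  by (simp add: linear_map_def)
lemma lin_add: "linear_map m n N \<Longrightarrow> X \<in> carrier_mat m m \<Longrightarrow> Y \<in> carrier_mat m m \<Longrightarrow> N (X + Y) = N X + N Y"
  by (simp add: linear_map_def)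
lemma lin_smult: "linear_map m n N \<Longrightarrow> X \<in> carrier_mat m m \<Longrightarrow> N (c \<cdot>\<^sub>m X) = c \<cdot>\<^sub>m N X"
  by (simp add: linear_map_def)

lemma decomp:
  assumes lin: "linear_map m n N" and X: "X \<in> carrier_mat m m" and y: "y < n" "y' < n"
  shows "N X $$ (y,y') = (\<Sum>p\<in>{..<m}\<times>{..<m}. X $$ p * N (unitm m p) $$ (y,y'))"
proof -
  have unit_c: "unitm m p \<in> carrier_mat m m" for p by (simp add: unitm_def)
  have restr_c: "restr m X S \<in> carrier_mat m m" for S by (simp add: restr_def)
  have gen: "S \<subseteq> {..<m}\<times>{..<m} \<Longrightarrow> N (restr m X S) $$ (y,y') = (\<Sum>p\<in>S. X $$ p * N (unitm m p) $$ (y,y'))"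
    if "finite S" for S
    using that
  proof (induction S rule: finite_induct)
    case empty
    have r0: "restr m X {} = 0\<^sub>m m m" by (rule eq_matI) (auto simp: restr_def)
    have e0: "0 \<cdot>\<^sub>m (0\<^sub>m m m) = (0\<^sub>m m m :: complex mat)" by auto
    have "N (0 \<cdot>\<^sub>m (0\<^sub>m m m)) = 0 \<cdot>\<^sub>m N (0\<^sub>m m m)" by (rule lin_smult[OF lin]) simp
    then have "N (restr m X {}) = 0 \<cdot>\<^sub>m N (0\<^sub>m m m)" unfolding r0 e0 .
    moreover have "N (0\<^sub>m m m) \<in> carrier_mat n n" using lin_carrier[OF lin] by simp
    ultimately show ?case using y by simp
  next
    case (insert p S)
    have "restr m X (insert p S) = restr m X S + X $$ p \<cdot>\<^sub>m unitm m p"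
      using insert(2) by (intro eq_matI) (auto simp: restr_def unitm_def)
    then have "N (restr m X (insert p S)) = N (restr m X S) + X $$ p \<cdot>\<^sub>m N (unitm m p)"
      using lin_add[OF lin] lin_smult[OF lin] restr_c unit_c by simp
    moreover have "N (restr m X S) \<in> carrier_mat n n" "N (unitm m p) \<in> carrier_mat n n"
      using lin_carrier[OF lin] restr_c unit_c by auto
    ultimately show ?case using insert y by simp
  qed
  have "restr m X ({..<m}\<times>{..<m}) = X" using X by (intro eq_matI) (auto simp: restr_def)
  then show ?thesis using gen[of "{..<m}\<times>{..<m}"] by simp
qed

lemma Re_mult_cnj_nonneg: "0 \<le> Re (z * cnj z)"
  by (simp add: complex_mult_cnj)

lemma psd_projw: "psd d (projw d w)"
proof -
  have "0 \<le> Re (\<Sum>i<d. \<Sum>j<d. cnj (v i) * projw d w $$ (i, j) * v j)" for v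
  proof -
    let ?z = "\<Sum>i<d. cnj (v i) * w i"
    have "(\<Sum>i<d. \<Sum>j<d. cnj (v i) * projw d w $$ (i, j) * v j) = (\<Sum>i<d. \<Sum>j<d. (cnj (v i) * w i) * (v j * cnj (w j)))"
      by (intro sum.cong refl) (simp add: projw_def)
    also have "\<dots> = ?z * cnj ?z"
      by (simp add: sum_product)
    finally show ?thesis
      using Re_mult_cnj_nonneg[of ?z] by simp
  qed
  then show ?thesis by (auto simp: psd_def projw_def)
qed

lemma tr_projw: "tr (projw d w) = (\<Sum>i<d. w i * cnj (w i))"
  by (simp add: tr_def projw_def)

lemma one_point: "finite A \<Longrightarrow> x \<in> A \<Longrightarrow> (\<And>i. i \<in> A \<Longrightarrow> i \<noteq> x \<Longrightarrow> g i = 0) \<Longrightarrow> sum g A = g x"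
  by (metis (mono_tags, lifting) sum.remove sum.neutral DiffE insertI1 add.right_neutral)

lemma two_point: "finite A \<Longrightarrow> x \<in> A \<Longrightarrow> x' \<in> A \<Longrightarrow> x \<noteq> x' \<Longrightarrow> (\<And>i. i \<in> A \<Longrightarrow> i \<noteq> x \<Longrightarrow> i \<noteq> x' \<Longrightarrow> g i = 0) \<Longrightarrow> sum g A = g x + g x'"
proof -
  assume a: "finite A" "x \<in> A" "x' \<in> A" "x \<noteq> x'" and z: "\<And>i. i \<in> A \<Longrightarrow> i \<noteq> x \<Longrightarrow> i \<noteq> x' \<Longrightarrow> g i = 0"
  have "sum g A = sum g {x, x'}"
    using a z by (intro sum.mono_neutral_right) auto
  then show ?thesis using a by simp
qed

lemma dsum_one:
  assumes "finite A" "x \<in> A" "\<And>i. i \<in> A \<Longrightarrow> i \<noteq> x \<Longrightarrow> w i = 0"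
  shows "(\<Sum>i\<in>A. \<Sum>j\<in>A. w i * cnj (w j) * (f i j :: complex)) = w x * cnj (w x) * f x x"
proof -
  have "(\<Sum>i\<in>A. \<Sum>j\<in>A. w i * cnj (w j) * f i j) = (\<Sum>j\<in>A. w x * cnj (w j) * f x j)"
    by (rule one_point) (use assms in auto)
  also have "\<dots> = w x * cnj (w x) * f x x"
    by (rule one_point) (use assms in auto)
  finally show ?thesis .
qed

lemma dsum_two:
  assumes "finite A" "x \<in> A" "x' \<in> A" "x \<noteq> x'" "\<And>i. i \<in> A \<Longrightarrow> i \<noteq> x \<Longrightarrow> i \<noteq> x' \<Longrightarrow> w i = 0"
  shows "(\<Sum>i\<in>A. \<Sum>j\<in>A. w i * cnj (w j) * (f i j :: complex)) =
     w x * cnj (w x) * f x x + w x * cnj (w x') * f x x' + (w x' * cnj (w x) * f x' x + w x' * cnj (w x') * f x' x')"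
proof -
  have "(\<Sum>i\<in>A. \<Sum>j\<in>A. w i * cnj (w j) * f i j) = (\<Sum>j\<in>A. w x * cnj (w j) * f x j) + (\<Sum>j\<in>A. w x' * cnj (w j) * f x' j)"
    by (rule two_point) (use assms in auto)
  also have "(\<Sum>j\<in>A. w x * cnj (w j) * f x j) = w x * cnj (w x) * f x x + w x * cnj (w x') * f x x'"
    by (rule two_point) (use assms in auto)
  also have "(\<Sum>j\<in>A. w x' * cnj (w j) * f x' j) = w x' * cnj (w x) * f x' x + w x' * cnj (w x') * f x' x'"
    by (rule two_point) (use assms in auto)
  finally show ?thesis .
qed

lemma phase_eq:
  assumes "\<And>t. ph a t x x' = ph b t y y'"
  shows "a x - a x' = b y - b y'"
proof (rule ccontr)
  assume ne: "a x - a x' \<noteq> b y - b y'"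
  define al where "al = a x - a x'"
  define be where "be = b y - b y'"
  define t where "t = pi / (al - be)"
  have "al * t = be * t + pi" using ne unfolding t_def al_def be_def by (simp add: field_simps)
  then have "ph a t x x' = cis (- (be * t)) * cis (- pi)"
    unfolding ph_def al_def[symmetric] by (simp add: cis_mult algebra_simps)
  also have "cis (- pi) = -1" by (simp add: complex_eq_iff)
  finally have "cis (- (be * t)) = - cis (- (be * t))"
    using assms[of t] unfolding ph_def be_def by simp
  then show False by simp
qed

theorem theorem2:
  fixes m n :: nat and a b :: "nat \<Rightarrow> real" and N :: "complex mat \<Rightarrow> complex mat"
  assumes "rel_nondegenerate m a n b"
    and "channel m n N"
  shows "time_covariant m a n b N \<longleftrightarrow>
         (\<forall>\<rho> \<in> carrier_mat m m. N \<rho> = dephase n (N (dephase m \<rho>)))"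
proof -
  have lin: "linear_map m n N" using assms(2) by (simp add: channel_def)
  define c where "c p q = N (unitm m p) $$ q" for p q
  define R where "R = {..<m} \<times> {..<m}"
  have finR: "finite R" by (simp add: R_def)
  have dec: "N X $$ (y,y') = (\<Sum>p\<in>R. X $$ p * c p (y,y'))"
    if "X \<in> carrier_mat m m" "y < n" "y' < n" for X y y'
    using decomp[OF lin that] unfolding c_def R_def by blast
  show ?thesis
  proof
    assume cov: "time_covariant m a n b N"
    have F1: "(\<Sum>p\<in>R. (ph a t (fst p) (snd p) - ph b t y y') * \<rho> $$ p * c p (y,y')) = 0"
      if rho: "density m \<rho>" and y: "y < n" "y' < n" for \<rho> t y y'
    proof -
      have rc: "\<rho> \<in> carrier_mat m m" using rho by (simp add: density_def psd_def)
      have Nc: "N \<rho> \<in> carrier_mat n n" using lin_carrier[OF lin rc] .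
      have eq: "N (mat m m (\<lambda>(i,j). ph a t i j * \<rho> $$ (i,j))) = mat n n (\<lambda>(i,j). ph b t i j * N \<rho> $$ (i,j))"
        using cov[unfolded time_covariant_def, rule_format, OF rho, of t] unfolding conj_evol[OF rc] conj_evol[OF Nc] .
      have "N (mat m m (\<lambda>(i,j). ph a t i j * \<rho> $$ (i,j))) $$ (y,y') = (\<Sum>p\<in>R. ph a t (fst p) (snd p) * \<rho> $$ p * c p (y,y'))"
        by (subst dec) (auto simp: y R_def intro!: sum.cong)
      moreover have "N (mat m m (\<lambda>(i,j). ph a t i j * \<rho> $$ (i,j))) $$ (y,y') = ph b t y y' * N \<rho> $$ (y,y')"
        unfolding eq using y by simp
      moreover have "N \<rho> $$ (y,y') = (\<Sum>p\<in>R. \<rho> $$ p * c p (y,y'))" using dec[OF rc y] .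
      moreover have "(\<Sum>p\<in>R. (ph a t (fst p) (snd p) - ph b t y y') * \<rho> $$ p * c p (y,y')) =
          (\<Sum>p\<in>R. ph a t (fst p) (snd p) * \<rho> $$ p * c p (y,y')) - ph b t y y' * (\<Sum>p\<in>R. \<rho> $$ p * c p (y,y'))"
        by (simp add: sum_subtractf sum_distrib_left algebra_simps)
      ultimately show ?thesis by simp
    qed
    define K where "K t y y' i j = (ph a t i j - ph b t y y') * c (i,j) (y,y')" for t y y' i j
    have F2: "(\<Sum>i<m. \<Sum>j<m. w i * cnj (w j) * K t y y' i j) = 0"
      if y: "y < n" "y' < n" for w t y y'
    proof -
      define Sr where "Sr = (\<Sum>i<m. (cmod (w i))^2)"
      have Sr0: "Sr \<ge> 0" unfolding Sr_def by (simp add: sum_nonneg)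
      have SS: "(\<Sum>i<m. w i * cnj (w i)) = complex_of_real Sr"
        unfolding Sr_def by (simp only: of_real_sum complex_norm_square)
      have swap: "(\<Sum>i<m. \<Sum>j<m. w i * cnj (w j) * K t y y' i j) = (\<Sum>p\<in>R. w (fst p) * cnj (w (snd p)) * K t y y' (fst p) (snd p))"
        unfolding R_def sum.cartesian_product by (simp add: case_prod_beta)
      show ?thesis
      proof (cases "Sr = 0")
        case True
        then have "\<forall>i\<in>{..<m}. (cmod (w i))^2 = 0"
          using sum_nonneg_eq_0_iff[of "{..<m}" "\<lambda>i. (cmod (w i))^2"] unfolding Sr_def by simp
        then have w0: "\<And>i. i < m \<Longrightarrow> w i = 0" by simp
        show ?thesis by (rule sum.neutral) (simp add: w0)
      next
        case False
        define s where "s = complex_of_real (sqrt Sr)"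
        have ss: "s * s = complex_of_real Sr" unfolding s_def of_real_mult[symmetric] using Sr0
          by simp
        have s0: "s \<noteq> 0" using False Sr0 unfolding s_def by simp
        have cs: "cnj s = s" unfolding s_def by simp
        define v where "v i = w i / s" for i
        have vv: "v i * cnj (v j) = w i * cnj (w j) / (s * s)" for i j
          unfolding v_def complex_cnj_divide cs by simp
        have "tr (projw m v) = (\<Sum>i<m. w i * cnj (w i) / (s * s))"
          unfolding tr_projw vv ..
        also have "\<dots> = (\<Sum>i<m. w i * cnj (w i)) / (s * s)"
          by (rule sum_divide_distrib[symmetric])
        finally have "tr (projw m v) = 1" using SS ss False by simp
        then have dens: "density m (projw m v)" using psd_projw by (simp add: density_def)
        have ar: "(A - B) * (X / D) * C = X * ((A - B) * C) / D" for A B X C D :: complex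
          by (simp add: divide_inverse mult_ac)
        have "0 = (\<Sum>p\<in>R. (ph a t (fst p) (snd p) - ph b t y y') * projw m v $$ p * c p (y,y'))"
          using F1[OF dens y] by simp
        also have "\<dots> = (\<Sum>p\<in>R. w (fst p) * cnj (w (snd p)) * K t y y' (fst p) (snd p) / (s * s))"
        proof (rule sum.cong[OF refl])
          fix p assume "p \<in> R"
          then obtain i j where p: "p = (i,j)" "i < m" "j < m" unfolding R_def by auto
          have "projw m v $$ p = w i * cnj (w j) / (s * s)"
            using p by (simp add: projw_def vv)
          then show "(ph a t (fst p) (snd p) - ph b t y y') * projw m v $$ p * c p (y,y') =
             w (fst p) * cnj (w (snd p)) * K t y y' (fst p) (snd p) / (s * s)"
            unfolding K_def using p(1) ar by simp
        qed
        also have "\<dots> = (\<Sum>i<m. \<Sum>j<m. w i * cnj (w j) * K t y y' i j) / (s * s)"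
          unfolding swap by (rule sum_divide_distrib[symmetric])
        finally show ?thesis using s0 by simp
      qed
    qed
    have F3: "K t y y' x x' = 0" if x: "x < m" "x' < m" and y: "y < n" "y' < n" for t y y' x x'
    proof -
      have diag: "K t y y' z z = 0" if z: "z < m" for z
      proof -
        define w where "w i = (if i = z then 1 else (0::complex))" for i
        have "(\<Sum>i<m. \<Sum>j<m. w i * cnj (w j) * K t y y' i j) = w z * cnj (w z) * K t y y' z z"
          by (rule dsum_one) (auto simp: w_def z)
        then show ?thesis using F2[OF y, of w t] by (simp add: w_def)
      qed
      show ?thesis
      proof (cases "x = x'")
        case True then show ?thesis using diag x by simp
      next
        case False
        define w1 where "w1 i = (if i = x then 1 else if i = x' then 1 else (0::complex))" for i
        define w2 where "w2 i = (if i = x then 1 else if i = x' then \<i> else (0::complex))" for i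
        have "(\<Sum>i<m. \<Sum>j<m. w1 i * cnj (w1 j) * K t y y' i j) =
           w1 x * cnj (w1 x) * K t y y' x x + w1 x * cnj (w1 x') * K t y y' x x' + (w1 x' * cnj (w1 x) * K t y y' x' x + w1 x' * cnj (w1 x') * K t y y' x' x')"
          by (rule dsum_two) (use x False in \<open>auto simp: w1_def\<close>)
        then have e1: "K t y y' x x' + K t y y' x' x = 0"
          using F2[OF y, of w1 t] diag x False by (simp add: w1_def)
        have "(\<Sum>i<m. \<Sum>j<m. w2 i * cnj (w2 j) * K t y y' i j) =
           w2 x * cnj (w2 x) * K t y y' x x + w2 x * cnj (w2 x') * K t y y' x x' + (w2 x' * cnj (w2 x) * K t y y' x' x + w2 x' * cnj (w2 x') * K t y y' x' x')"
          by (rule dsum_two) (use x False in \<open>auto simp: w2_def\<close>)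
        then have e2: "- \<i> * K t y y' x x' + \<i> * K t y y' x' x = 0"
          using F2[OF y, of w2 t] diag x False by (simp add: w2_def)
        from e1 have "K t y y' x' x = - K t y y' x x'" by (simp add: eq_neg_iff_add_eq_0 add.commute)
        with e2 have "-2 * \<i> * K t y y' x x' = 0" by (simp add: algebra_simps)
        then show ?thesis by simp
      qed
    qed
    have F4: "fst p = snd p \<and> y = y'" if p: "p \<in> R" and y: "y < n" "y' < n" and cne: "c p (y,y') \<noteq> 0" for p y y'
    proof -
      obtain x x' where px: "p = (x,x')" "x < m" "x' < m" using p unfolding R_def by auto
      have "ph a t x x' = ph b t y y'" for t
        using F3[OF px(2,3) y, of t] cne px(1) unfolding K_def by simp
      then have "a x - a x' = b y - b y'" by (rule phase_eq)
      then have "x = x' \<and> y = y'" using assms(1)[unfolded rel_nondegenerate_def, rule_format, OF px(2,3) y] by simp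
      then show ?thesis using px by simp
    qed
    show "\<forall>\<rho> \<in> carrier_mat m m. N \<rho> = dephase n (N (dephase m \<rho>))"
    proof
      fix \<rho> :: "complex mat" assume rc: "\<rho> \<in> carrier_mat m m"
      have Nc: "N \<rho> \<in> carrier_mat n n" using lin_carrier[OF lin rc] .
      have dc: "dephase m \<rho> \<in> carrier_mat m m" by (simp add: dephase_def)
      show "N \<rho> = dephase n (N (dephase m \<rho>))"
      proof (rule eq_matI)
        fix y y' assume "y < dim_row (dephase n (N (dephase m \<rho>)))" "y' < dim_col (dephase n (N (dephase m \<rho>)))"
        then have y: "y < n" "y' < n" by (auto simp: dephase_def)
        show "N \<rho> $$ (y,y') = dephase n (N (dephase m \<rho>)) $$ (y,y')"
        proof (cases "y = y'")
          case True
          have "N \<rho> $$ (y,y') = (\<Sum>p\<in>R. \<rho> $$ p * c p (y,y'))" using dec[OF rc y] .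
          also have "\<dots> = (\<Sum>p\<in>R. dephase m \<rho> $$ p * c p (y,y'))"
          proof (rule sum.cong[OF refl])
            fix p assume pR: "p \<in> R"
            obtain x x' where px: "p = (x,x')" "x < m" "x' < m" using pR unfolding R_def by auto
            show "\<rho> $$ p * c p (y,y') = dephase m \<rho> $$ p * c p (y,y')"
            proof (cases "c p (y,y') = 0")
              case False
              then have "x = x'" using F4[OF pR y] px by simp
              then show ?thesis using px by (simp add: dephase_def)
            qed simp
          qed
          also have "\<dots> = N (dephase m \<rho>) $$ (y,y')" using dec[OF dc y] by simp
          finally show ?thesis using True y by (simp add: dephase_def)
        next
          case False
          have "N \<rho> $$ (y,y') = (\<Sum>p\<in>R. \<rho> $$ p * c p (y,y'))" using dec[OF rc y] .
          also have "\<dots> = 0"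
          proof (rule sum.neutral, intro ballI)
            fix p assume "p \<in> R"
            then have "c p (y,y') = 0" using F4[OF _ y] False by blast
            then show "\<rho> $$ p * c p (y,y') = 0" by simp
          qed
          finally show ?thesis using False y by (simp add: dephase_def)
        qed
      qed (use Nc in \<open>auto simp: dephase_def\<close>)
    qed
  next
    assume dep: "\<forall>\<rho> \<in> carrier_mat m m. N \<rho> = dephase n (N (dephase m \<rho>))"
    show "time_covariant m a n b N"
      unfolding time_covariant_def
    proof (intro allI impI)
      fix t \<rho> assume rho: "density m \<rho>"
      have rc: "\<rho> \<in> carrier_mat m m" using rho by (simp add: density_def psd_def)
      have Nc: "N \<rho> \<in> carrier_mat n n" using lin_carrier[OF lin rc] .
      define M where "M = mat m m (\<lambda>(i,j). ph a t i j * \<rho> $$ (i,j))"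
      have Mc: "M \<in> carrier_mat m m" by (simp add: M_def)
      have dM: "dephase m M = dephase m \<rho>"
        by (rule eq_matI) (auto simp: dephase_def M_def)
      have "N (evol m a t * \<rho> * adj (evol m a t)) = N M"
        using conj_evol[OF rc] unfolding M_def by simp
      also have "\<dots> = dephase n (N (dephase m \<rho>))" using dep[rule_format, OF Mc] unfolding dM .
      also have "\<dots> = N \<rho>" using dep[rule_format, OF rc] by simp
      also have "N \<rho> = mat n n (\<lambda>(i,j). ph b t i j * N \<rho> $$ (i,j))"
      proof (rule eq_matI)
        fix i j assume "i < dim_row (mat n n (\<lambda>(i,j). ph b t i j * N \<rho> $$ (i,j)))"
          "j < dim_col (mat n n (\<lambda>(i,j). ph b t i j * N \<rho> $$ (i,j)))"
        then have ij: "i < n" "j < n" by auto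
        have "N \<rho> $$ (i,j) = dephase n (N (dephase m \<rho>)) $$ (i,j)" using dep[rule_format, OF rc] by simp
        then have "i \<noteq> j \<Longrightarrow> N \<rho> $$ (i,j) = 0" using ij by (simp add: dephase_def)
        then show "N \<rho> $$ (i,j) = mat n n (\<lambda>(i,j). ph b t i j * N \<rho> $$ (i,j)) $$ (i,j)"
          using ij by (cases "i = j") auto
      qed (use Nc in auto)
      also have "\<dots> = evol n b t * N \<rho> * adj (evol n b t)"
        using conj_evol[OF Nc] by simp
      finally show "N (evol m a t * \<rho> * adj (evol m a t)) = evol n b t * N \<rho> * adj (evol n b t)" .
    qed
  qed
qed

end
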